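(* Let $G=(V,E)$ be a connected graph having the weighted strict Gauss–Lucas property, and let $v_1,v_2\in V$ be two distinct vertices not joined by an edge. Let $G_1$ be the graph obtained by merging $v_1$ and $v_2$ into a single new vertex $v$, with every edge formerly incident to $v_1$ or $v_2$ now incident to $v$ (keeping multiplicities, so parallel edges may arise). Then $G_1$ has the weighted strict Gauss–Lucas property.
   Context: Graphs may have parallel edges and self-loops; degrees count edges with multiplicity, a loop counting twice. A weight assignment $w:V\to\mathbb{Z}_{>0}$ is legal if $w(v)\ge\deg(v)$ for all $v$. For $0<\beta\le1$ and complex $(z_v)_{v\in V}$, $Z_w(G)=\sum_{\sigma\in\{+,-\}^V}\beta^{d(\sigma)}\prod_{v:\sigma(v)=+}z_v^{w(v)}$, where $d(\sigma)$ is the number (with multiplicity) of edges whose endpoints have different spins, and $\mathcal{D}_G=\sum_{v\in V}z_v\partial/\partial z_v$. $G$ has the weighted strict Gauss–Lucas property if for every legal $w$, every $0<\beta<1$ and every $(z_v)$ with $|z_v|\ge1$ for all $v$, $\mathcal{D}_GZ_w(G)\ne0$. *)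

theory Defs
  imports "HOL-Analysis.Analysis"
begin

text \<open>A finite multigraph: vertex set V, edge multiset E; each edge is a 2-element
  multiset of vertices ({#v,v#} is a loop). Parallel edges = multiplicity in E.\<close>

definition mgraph :: "'a set \<Rightarrow> 'a multiset multiset \<Rightarrow> bool" where
  "mgraph V E \<longleftrightarrow> finite V \<and> (\<forall>e\<in>#E. size e = 2 \<and> set_mset e \<subseteq> V)"

text \<open>Degree with multiplicity; a loop contributes 2.\<close>
definition mdeg :: "'a multiset multiset \<Rightarrow> 'a \<Rightarrow> nat" where
  "mdeg E v = (\<Sum>e\<in>#E. count e v)"

definition adj :: "'a multiset multiset \<Rightarrow> 'a \<Rightarrow> 'a \<Rightarrow> bool" where
  "adj E x y \<longleftrightarrow> {#x, y#} \<in># E"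

definition mconnected :: "'a set \<Rightarrow> 'a multiset multiset \<Rightarrow> bool" where
  "mconnected V E \<longleftrightarrow> (\<forall>x\<in>V. \<forall>y\<in>V. (x, y) \<in> {(a, b). adj E a b}\<^sup>*)"

text \<open>Number of edges (with multiplicity) whose endpoints get different spins,
  where S is the set of vertices with spin +.\<close>
definition dcut :: "'a multiset multiset \<Rightarrow> 'a set \<Rightarrow> nat" where
  "dcut E S = size (filter_mset (\<lambda>e. \<exists>x y. e = {#x, y#} \<and> (x \<in> S) \<noteq> (y \<in> S)) E)"

definition Zw :: "'a set \<Rightarrow> 'a multiset multiset \<Rightarrow> ('a \<Rightarrow> nat) \<Rightarrow> real \<Rightarrow> ('a \<Rightarrow> complex) \<Rightarrow> complex" where
  "Zw V E w \<beta> z = (\<Sum>S\<in>Pow V. complex_of_real (\<beta> ^ dcut E S) * (\<Prod>v\<in>S. z v ^ w v))"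

definition DG :: "'a set \<Rightarrow> (('a \<Rightarrow> complex) \<Rightarrow> complex) \<Rightarrow> ('a \<Rightarrow> complex) \<Rightarrow> complex" where
  "DG V F z = (\<Sum>v\<in>V. z v * deriv (\<lambda>t. F (z(v := t))) (z v))"

definition legal :: "'a set \<Rightarrow> 'a multiset multiset \<Rightarrow> ('a \<Rightarrow> nat) \<Rightarrow> bool" where
  "legal V E w \<longleftrightarrow> (\<forall>v\<in>V. w v > 0 \<and> w v \<ge> mdeg E v)"

definition weighted_strict_GL :: "'a set \<Rightarrow> 'a multiset multiset \<Rightarrow> bool" where
  "weighted_strict_GL V E \<longleftrightarrow>
     (\<forall>w \<beta> z. legal V E w \<longrightarrow> 0 < \<beta> \<longrightarrow> \<beta> < 1 \<longrightarrow> (\<forall>v\<in>V. 1 \<le> norm (z v)) \<longrightarrow>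
        DG V (Zw V E w \<beta>) z \<noteq> 0)"

text \<open>Merging v2 into v1: the merged vertex is named v1, v2 disappears.\<close>
definition merge_edges :: "'a \<Rightarrow> 'a \<Rightarrow> 'a multiset multiset \<Rightarrow> 'a multiset multiset" where
  "merge_edges v1 v2 E = image_mset (image_mset (\<lambda>x. if x = v2 then v1 else x)) E"

end

theory Submission
  imports Defs "HOL-Computational_Algebra.Polynomial"
begin



lemma asano_id:
  fixes A B C D x y :: complex
  assumes "D \<noteq> 0"
  shows "A + B*x + C*y + D*x*y = D * ((x + C/D) * (y + B/D) - (B/D * (C/D) - A/D))"
  using assms by (simp add: field_simps)

lemma asano_bound:
  fixes A B C D :: complex
  assumes H: "\<forall>x y. 1 \<le> norm x \<longrightarrow> 1 \<le> norm y \<longrightarrow> A + B*x + C*y + D*x*y \<noteq> 0"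
    and D: "D \<noteq> 0"
  shows "norm C < norm D"
proof (rule ccontr)
  assume "\<not> norm C < norm D"
  define b where "b = B/D"
  define c where "c = C/D"
  define k where "k = b*c - A/D"
  have P: "\<And>x y. A + B*x + C*y + D*x*y = D * ((x + c) * (y + b) - k)"
    unfolding b_def c_def k_def using asano_id[OF D] by blast
  have nc: "norm c \<ge> 1" using \<open>\<not> norm C < norm D\<close> D by (simp add: c_def norm_divide divide_simps)
  hence c0: "c \<noteq> 0" by auto
  define s where "s = c / complex_of_real (norm c)"
  have cs: "c = complex_of_real (norm c) * s" using c0 by (simp add: s_def)
  have ns: "norm s = 1" using c0 by (simp add: s_def norm_divide)
  show False
  proof (cases "k = 0")
    case True
    have "A + B*(-c) + C*1 + D*(-c)*1 = 0" using P[of "-c" 1] True by simp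
    moreover have "1 \<le> norm (-c)" using nc by simp
    ultimately show False using H[rule_format, of "-c" 1] by simp
  next
    case False
    define e where "e = norm k / (1 + norm b)"
    have e0: "e > 0" using False by (simp add: e_def add_pos_nonneg)
    define x where "x = - c - complex_of_real e * s"
    have xc: "x + c = - complex_of_real e * s" by (simp add: x_def)
    have xc0: "x + c \<noteq> 0" using e0 ns xc by auto
    have nx: "norm x = norm c + e"
    proof -
      have "x = - complex_of_real (norm c + e) * s" unfolding x_def by (subst cs) (simp add: algebra_simps)
      hence "norm x = norm (complex_of_real (norm c + e)) * norm s" by (simp only: norm_mult norm_minus_cancel)
      thus ?thesis using ns e0 by (simp only: norm_of_real) simp
    qed
    define y where "y = k / (x + c) - b"
    have "norm (k / (x + c)) = norm k / e" using xc ns e0 by (simp add: norm_divide norm_mult)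
    also have "\<dots> = 1 + norm b" using e0 False by (simp add: e_def field_simps)
    finally have "norm y \<ge> 1" unfolding y_def using norm_triangle_ineq2[of "k/(x+c)" b] by linarith
    moreover have "norm x \<ge> 1" using nx nc e0 by simp
    moreover have "A + B*x + C*y + D*x*y = 0" unfolding P y_def using xc0 by simp
    ultimately show False using H by blast
  qed
qed

lemma asano_half:
  fixes A B C D u :: complex
  assumes H: "\<forall>x y. 1 \<le> norm x \<longrightarrow> 1 \<le> norm y \<longrightarrow> A + B*x + C*y + D*x*y \<noteq> 0"
    and D: "D \<noteq> 0" and nu: "1 \<le> norm u" and CB: "norm C \<le> norm B"
    and nB: "norm B < norm D" and nC: "norm C < norm D"
  shows "A + D*u \<noteq> 0"
proof
  assume Z: "A + D*u = 0"
  define b where "b = B/D"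
  define c where "c = C/D"
  define k where "k = b*c - A/D"
  have P: "\<And>x y. A + B*x + C*y + D*x*y = D * ((x + c) * (y + b) - k)"
    unfolding b_def c_def k_def using asano_id[OF D] by blast
  have nb: "norm b < 1" using nB D by (simp add: b_def norm_divide divide_simps)
  have ncb: "norm c \<le> norm b" using CB D by (simp add: b_def c_def norm_divide divide_simps)
  have ku: "k = b*c + u" using Z D by (simp add: k_def field_simps)
  define s where "s = (if b = 0 then 1 else b / complex_of_real (norm b))"
  have bs: "b = complex_of_real (norm b) * s" by (simp add: s_def)
  have ns: "norm s = 1" by (simp add: s_def norm_divide)
  define y where "y = - s"
  have yb1: "- complex_of_real (1 - norm b) * s = -s + complex_of_real (norm b) * s" by (simp add: algebra_simps)
  have yb: "y + b = - complex_of_real (1 - norm b) * s" unfolding yb1 using bs[symmetric] by (simp add: y_def)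
  have yb0: "y + b \<noteq> 0" using yb ns nb by auto
  have "norm (y + b) = norm (complex_of_real (1 - norm b)) * norm s" unfolding yb by (simp only: norm_mult norm_minus_cancel)
  hence nyb: "norm (y + b) = 1 - norm b" using ns nb by (simp only: norm_of_real) simp
  define x where "x = k / (y + b) - c"
  have nk: "norm k \<ge> 1 - norm b * norm c"
  proof -
    have "norm u \<le> norm k + norm (b*c)" using norm_triangle_ineq4[of k "b*c"] ku by simp
    thus ?thesis using nu by (simp add: norm_mult)
  qed
  have "(1 - norm b) * (1 + norm c) \<le> norm k" using nk ncb by (simp add: algebra_simps)
  hence "1 + norm c \<le> norm k / (1 - norm b)" using nb by (simp add: field_simps)
  hence "1 \<le> norm x" unfolding x_def using norm_triangle_ineq2[of "k/(y+b)" c] nyb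
    by (simp add: norm_divide)
  moreover have "1 \<le> norm y" by (simp add: y_def ns)
  moreover have "A + B*x + C*y + D*x*y = 0" unfolding P x_def using yb0 by simp
  ultimately show False using H by blast
qed

lemma asano_swap:
  fixes A B C D :: complex
  assumes H: "\<forall>x y. 1 \<le> norm x \<longrightarrow> 1 \<le> norm y \<longrightarrow> A + B*x + C*y + D*x*y \<noteq> 0"
  shows "\<forall>x y. 1 \<le> norm x \<longrightarrow> 1 \<le> norm y \<longrightarrow> A + C*x + B*y + D*x*y \<noteq> 0"
proof (intro allI impI)
  fix x y :: complex assume "1 \<le> norm x" "1 \<le> norm y"
  hence "A + B*y + C*x + D*y*x \<noteq> 0" using H by blast
  thus "A + C*x + B*y + D*x*y \<noteq> 0" by (simp add: algebra_simps)
qed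

lemma asano:
  fixes A B C D u :: complex
  assumes H: "\<forall>x y. 1 \<le> norm x \<longrightarrow> 1 \<le> norm y \<longrightarrow> A + B*x + C*y + D*x*y \<noteq> 0"
    and D: "D \<noteq> 0" and nu: "1 \<le> norm u"
  shows "A + D*u \<noteq> 0"
proof -
  have nC: "norm C < norm D" by (rule asano_bound[OF H D])
  have nB: "norm B < norm D" by (rule asano_bound[OF asano_swap[OF H] D])
  show ?thesis
  proof (cases "norm C \<le> norm B")
    case True thus ?thesis using asano_half[OF H D nu True nB nC] by simp
  next
    case False thus ?thesis using asano_half[OF asano_swap[OF H] D nu _ nC nB] by simp
  qed
qed




definition DGx :: "'a set \<Rightarrow> 'a multiset multiset \<Rightarrow> ('a \<Rightarrow> nat) \<Rightarrow> real \<Rightarrow> ('a \<Rightarrow> complex) \<Rightarrow> complex" where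
  "DGx V E w \<beta> z = (\<Sum>S\<in>Pow V. complex_of_real (\<beta> ^ dcut E S) * of_nat (sum w S) * (\<Prod>v\<in>S. z v ^ w v))"

lemma mult_pow_pred: "(z::complex) * (of_nat n * z ^ (n - 1)) = of_nat n * z ^ n"
  by (cases n) auto

lemma DG_Zw:
  assumes fin: "finite V"
  shows "DG V (Zw V E w \<beta>) z = DGx V E w \<beta> z"
proof -
  define c where "c S = complex_of_real (\<beta> ^ dcut E S)" for S
  have trm: "z v * deriv (\<lambda>t. Zw V E w \<beta> (z(v := t))) (z v)
      = (\<Sum>S\<in>Pow V. c S * (if v \<in> S then of_nat (w v) * (\<Prod>u\<in>S. z u ^ w u) else 0))" if v: "v \<in> V" for v
  proof -
    define n where "n S = (if v \<in> S then w v else 0)" for S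
    define K where "K S = (\<Prod>u\<in>S-{v}. z u ^ w u)" for S
    have fS: "finite S" if "S \<in> Pow V" for S using fin that finite_subset by auto
    have eq: "Zw V E w \<beta> (z(v := t)) = (\<Sum>S\<in>Pow V. c S * (t ^ n S * K S))" for t
      unfolding Zw_def
    proof (rule sum.cong[OF refl])
      fix S assume S: "S \<in> Pow V"
      have "(\<Prod>u\<in>S. (z(v := t)) u ^ w u) = t ^ n S * K S"
      proof (cases "v \<in> S")
        case True
        have "(\<Prod>u\<in>S. (z(v := t)) u ^ w u) = (z(v := t)) v ^ w v * (\<Prod>u\<in>S-{v}. (z(v := t)) u ^ w u)"
          using prod.remove[OF fS[OF S] True] by blast
        also have "(\<Prod>u\<in>S-{v}. (z(v := t)) u ^ w u) = K S" unfolding K_def by (rule prod.cong) auto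
        finally show ?thesis using True by (simp add: n_def)
      next
        case False
        thus ?thesis unfolding K_def n_def by (auto intro: prod.cong)
      qed
      thus "complex_of_real (\<beta> ^ dcut E S) * (\<Prod>u\<in>S. (z(v := t)) u ^ w u) = c S * (t ^ n S * K S)"
        by (simp add: c_def)
    qed
    have D: "((\<lambda>t. \<Sum>S\<in>Pow V. c S * (t ^ n S * K S)) has_field_derivative
        (\<Sum>S\<in>Pow V. c S * (of_nat (n S) * z v ^ (n S - 1) * K S))) (at (z v))"
      by (auto intro!: derivative_eq_intros sum.cong simp: ac_simps)
    have "deriv (\<lambda>t. Zw V E w \<beta> (z(v := t))) (z v) = (\<Sum>S\<in>Pow V. c S * (of_nat (n S) * z v ^ (n S - 1) * K S))"
      unfolding eq using DERIV_imp_deriv[OF D] .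
    hence "z v * deriv (\<lambda>t. Zw V E w \<beta> (z(v := t))) (z v) = (\<Sum>S\<in>Pow V. c S * ((z v * (of_nat (n S) * z v ^ (n S - 1))) * K S))"
      by (simp add: sum_distrib_left algebra_simps)
    also have "\<dots> = (\<Sum>S\<in>Pow V. c S * (if v \<in> S then of_nat (w v) * (\<Prod>u\<in>S. z u ^ w u) else 0))"
    proof (rule sum.cong[OF refl])
      fix S assume S: "S \<in> Pow V"
      show "c S * ((z v * (of_nat (n S) * z v ^ (n S - 1))) * K S) = c S * (if v \<in> S then of_nat (w v) * (\<Prod>u\<in>S. z u ^ w u) else 0)"
      proof (cases "v \<in> S")
        case True
        have "(\<Prod>u\<in>S. z u ^ w u) = z v ^ w v * K S" unfolding K_def using prod.remove[OF fS[OF S] True] by blast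
        moreover have "z v * (of_nat (n S) * z v ^ (n S - 1)) = of_nat (w v) * z v ^ w v"
          using True mult_pow_pred[of "z v" "w v"] by (simp add: n_def)
        ultimately show ?thesis using True by (simp add: ac_simps)
      next
        case False thus ?thesis by (simp add: n_def)
      qed
    qed
    finally show ?thesis .
  qed
  have "DG V (Zw V E w \<beta>) z = (\<Sum>v\<in>V. \<Sum>S\<in>Pow V. c S * (if v \<in> S then of_nat (w v) * (\<Prod>u\<in>S. z u ^ w u) else 0))"
    unfolding DG_def using trm by (simp cong: sum.cong)
  also have "\<dots> = (\<Sum>S\<in>Pow V. \<Sum>v\<in>V. c S * (if v \<in> S then of_nat (w v) * (\<Prod>u\<in>S. z u ^ w u) else 0))"
    by (rule sum.swap)
  also have "\<dots> = DGx V E w \<beta> z" unfolding DGx_def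
  proof (rule sum.cong[OF refl])
    fix S assume S: "S \<in> Pow V"
    have "(\<Sum>v\<in>V. c S * (if v \<in> S then of_nat (w v) * (\<Prod>u\<in>S. z u ^ w u) else 0))
        = c S * (\<Prod>u\<in>S. z u ^ w u) * (\<Sum>v\<in>V. if v \<in> S then of_nat (w v) else 0)"
      by (simp add: sum_distrib_left if_distrib algebra_simps cong: if_cong)
    also have "(\<Sum>v\<in>V. if v \<in> S then (of_nat (w v)::complex) else 0) = (\<Sum>v\<in>{v\<in>V. v \<in> S}. of_nat (w v))"
      using sum.inter_filter[OF fin, symmetric] by simp
    also have "{v\<in>V. v \<in> S} = S" using S by auto
    finally show "(\<Sum>v\<in>V. c S * (if v \<in> S then of_nat (w v) * (\<Prod>u\<in>S. z u ^ w u) else 0)) =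
         complex_of_real (\<beta> ^ dcut E S) * of_nat (sum w S) * (\<Prod>v\<in>S. z v ^ w v)"
      by (simp add: c_def algebra_simps)
  qed
  finally show ?thesis .
qed




lemma size2_pair: "size e = 2 \<Longrightarrow> \<exists>x y. e = {#x, y#}"
proof -
  assume "size e = 2"
  then obtain a N where "e = add_mset a N" "size N = 1"
    using size_eq_Suc_imp_eq_union[of e 1] by auto
  moreover then obtain b N' where "N = add_mset b N'" "size N' = 0"
    using size_eq_Suc_imp_eq_union[of N 0] by auto
  ultimately show ?thesis by auto
qed

lemma pair_pred: "(\<exists>x y. {#a, b#} = {#x, y#} \<and> (x \<in> S) \<noteq> (y \<in> S)) \<longleftrightarrow> (a \<in> S) \<noteq> (b \<in> S)"
  by (auto simp: add_eq_conv_ex)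

lemma dcut_merge:
  assumes "\<forall>e\<in>#E. size e = 2" "\<forall>x. (f x \<in> S1) = (x \<in> S)"
  shows "dcut (image_mset (image_mset f) E) S1 = dcut E S"
  unfolding dcut_def filter_mset_image_mset size_image_mset
proof (rule arg_cong[where f=size], rule filter_mset_cong[OF refl])
  fix e assume "e \<in># E"
  then obtain x y where e: "e = {#x, y#}" using assms(1) size2_pair by blast
  show "(\<exists>a b. image_mset f e = {#a, b#} \<and> (a \<in> S1) \<noteq> (b \<in> S1)) =
        (\<exists>a b. e = {#a, b#} \<and> (a \<in> S) \<noteq> (b \<in> S))"
    unfolding e using pair_pred[of "f x" "f y" S1] pair_pred[of x y S] assms(2) by simp
qed

lemma mdeg_merge1:
  assumes "\<forall>e\<in>#E. size e = 2" "v1 \<noteq> v2"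
  shows "mdeg (merge_edges v1 v2 E) v1 = mdeg E v1 + mdeg E v2"
  using assms(1)
proof (induction E)
  case empty thus ?case by (simp add: mdeg_def merge_edges_def)
next
  case (add e E)
  have "size e = 2" using add.prems by simp
  then obtain x y where "e = {#x, y#}" using size2_pair by blast
  with add assms(2) show ?case by (auto simp: mdeg_def merge_edges_def)
qed

lemma mdeg_merge2:
  assumes "\<forall>e\<in>#E. size e = 2" "u \<noteq> v1" "u \<noteq> v2"
  shows "mdeg (merge_edges v1 v2 E) u = mdeg E u"
  using assms(1)
proof (induction E)
  case empty thus ?case by (simp add: mdeg_def merge_edges_def)
next
  case (add e E)
  have "size e = 2" using add.prems by simp
  then obtain x y where "e = {#x, y#}" using size2_pair by blast
  with add assms(2,3) show ?case by (auto simp: mdeg_def merge_edges_def)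
qed

lemma mdeg_ge: "e \<in># E \<Longrightarrow> count e v \<le> mdeg E v"
  unfolding mdeg_def by (metis multi_member_split image_mset_add_mset sum_mset.insert le_add1)

lemma sum_Pow_insert:
  assumes "finite A" "a \<notin> A"
  shows "(\<Sum>S\<in>Pow (insert a A). F S) = (\<Sum>T\<in>Pow A. F T + F (insert a T))"
proof -
  have inj: "inj_on (insert a) (Pow A)" using assms(2) by (auto simp: inj_on_def)
  have dis: "Pow A \<inter> insert a ` Pow A = {}" using assms(2) by auto
  have "(\<Sum>S\<in>Pow (insert a A). F S) = (\<Sum>S\<in>Pow A. F S) + (\<Sum>S\<in>insert a ` Pow A. F S)"
    unfolding Pow_insert using assms(1) dis by (intro sum.union_disjoint) auto
  also have "(\<Sum>S\<in>insert a ` Pow A. F S) = (\<Sum>T\<in>Pow A. F (insert a T))"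
    using sum.reindex[OF inj] by simp
  finally show ?thesis by (simp add: sum.distrib)
qed




definition cf :: "'a multiset multiset \<Rightarrow> real \<Rightarrow> ('a \<Rightarrow> nat) \<Rightarrow> 'a set \<Rightarrow> 'a set \<Rightarrow> nat \<Rightarrow> ('a \<Rightarrow> complex) \<Rightarrow> complex" where
  "cf E \<beta> w V' X c z = (\<Sum>T\<in>Pow V'. complex_of_real (\<beta> ^ dcut E (X \<union> T)) * of_nat (sum w T + c) * (\<Prod>u\<in>T. z u ^ w u))"

lemma cf_cong:
  assumes "\<forall>u\<in>V'. w u = w' u \<and> z u = z' u"
  shows "cf E \<beta> w V' X c z = cf E \<beta> w' V' X c z'"
  unfolding cf_def
proof (rule sum.cong[OF refl])
  fix T assume "T \<in> Pow V'"
  hence T: "\<forall>u\<in>T. w u = w' u \<and> z u = z' u" using assms by auto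
  have "sum w T = sum w' T" using T by (auto intro: sum.cong)
  moreover have "(\<Prod>u\<in>T. z u ^ w u) = (\<Prod>u\<in>T. z' u ^ w' u)" using T by (auto intro: prod.cong)
  ultimately show "complex_of_real (\<beta> ^ dcut E (X \<union> T)) * of_nat (sum w T + c) * (\<Prod>u\<in>T. z u ^ w u) =
         complex_of_real (\<beta> ^ dcut E (X \<union> T)) * of_nat (sum w' T + c) * (\<Prod>u\<in>T. z' u ^ w' u)" by simp
qed

lemma cf_dcut:
  assumes "\<And>T. T \<subseteq> V' \<Longrightarrow> dcut E (X \<union> T) = dcut E' (X' \<union> T)"
  shows "cf E \<beta> w V' X c z = cf E' \<beta> w V' X' c z"
  unfolding cf_def using assms by (intro sum.cong) auto

lemma F_ins:
  assumes "finite T" "a \<notin> T"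
  shows "complex_of_real (\<beta> ^ dcut E (insert a T)) * of_nat (sum w (insert a T)) * (\<Prod>u\<in>insert a T. z u ^ w u)
    = complex_of_real (\<beta> ^ dcut E (insert a T)) * of_nat (sum w T + w a) * (\<Prod>u\<in>T. z u ^ w u) * z a ^ w a"
  using assms by (simp add: algebra_simps)

lemma decomp1:
  assumes "finite V'" "v1 \<notin> V'"
  shows "DGx (insert v1 V') E w \<beta> z = cf E \<beta> w V' {} 0 z + cf E \<beta> w V' {v1} (w v1) z * z v1 ^ w v1"
proof -
  have fT: "\<And>T. T \<in> Pow V' \<Longrightarrow> finite T \<and> v1 \<notin> T" using assms finite_subset by auto
  show ?thesis
    unfolding DGx_def sum_Pow_insert[OF assms] sum.distrib cf_def sum_distrib_right
    by (intro arg_cong2[where f="(+)"] sum.cong refl) (simp_all add: F_ins fT)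
qed

lemma decomp2:
  assumes "finite V'" "v1 \<notin> V'" "v2 \<notin> V'" "v1 \<noteq> v2"
  shows "DGx (insert v1 (insert v2 V')) E w \<beta> z = cf E \<beta> w V' {} 0 z + cf E \<beta> w V' {v1} (w v1) z * z v1 ^ w v1
     + cf E \<beta> w V' {v2} (w v2) z * z v2 ^ w v2 + cf E \<beta> w V' {v1, v2} (w v1 + w v2) z * (z v1 ^ w v1 * z v2 ^ w v2)"
proof -
  have fT: "\<And>T. T \<in> Pow V' \<Longrightarrow> finite T \<and> v1 \<notin> T \<and> v2 \<notin> T" using assms finite_subset by auto
  define F where "F S = complex_of_real (\<beta> ^ dcut E S) * of_nat (sum w S) * (\<Prod>u\<in>S. z u ^ w u)" for S
  have "DGx (insert v1 (insert v2 V')) E w \<beta> z = (\<Sum>S\<in>Pow (insert v1 (insert v2 V')). F S)"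
    unfolding DGx_def F_def ..
  also have "\<dots> = (\<Sum>T\<in>Pow (insert v2 V'). F T + F (insert v1 T))"
    using assms by (intro sum_Pow_insert) auto
  also have "\<dots> = (\<Sum>T\<in>Pow V'. (F T + F (insert v1 T)) + (F (insert v2 T) + F (insert v1 (insert v2 T))))"
    using assms by (intro sum_Pow_insert) auto
  also have "\<dots> = (\<Sum>T\<in>Pow V'. F T) + (\<Sum>T\<in>Pow V'. F (insert v1 T)) + (\<Sum>T\<in>Pow V'. F (insert v2 T))
      + (\<Sum>T\<in>Pow V'. F (insert v1 (insert v2 T)))"
    by (simp add: sum.distrib)
  also have "(\<Sum>T\<in>Pow V'. F T) = cf E \<beta> w V' {} 0 z"
    unfolding F_def cf_def by simp
  also have "(\<Sum>T\<in>Pow V'. F (insert v1 T)) = cf E \<beta> w V' {v1} (w v1) z * z v1 ^ w v1"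
    unfolding F_def cf_def sum_distrib_right by (intro sum.cong refl) (simp add: fT algebra_simps)
  also have "(\<Sum>T\<in>Pow V'. F (insert v2 T)) = cf E \<beta> w V' {v2} (w v2) z * z v2 ^ w v2"
    unfolding F_def cf_def sum_distrib_right by (intro sum.cong refl) (simp add: fT algebra_simps)
  also have "(\<Sum>T\<in>Pow V'. F (insert v1 (insert v2 T))) = cf E \<beta> w V' {v1, v2} (w v1 + w v2) z * (z v1 ^ w v1 * z v2 ^ w v2)"
    unfolding F_def cf_def sum_distrib_right using assms(4) by (intro sum.cong refl) (simp add: fT algebra_simps)
  finally show ?thesis .
qed




lemma sum_eq_imp_eq:
  assumes "finite V'" "T \<subseteq> V'" "\<forall>u\<in>V'. (w::'a\<Rightarrow>nat) u > 0" "sum w T = sum w V'"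
  shows "T = V'"
proof (rule ccontr)
  assume "T \<noteq> V'"
  then obtain u where u: "u \<in> V' - T" using assms(2) by auto
  have "sum w V' = sum w (V' - T) + sum w T" using sum.subset_diff[OF assms(2,1)] .
  moreover have "w u \<le> sum w (V' - T)" using u assms(1) by (intro member_le_sum) auto
  ultimately show False using assms(3,4) u by auto
qed

lemma cf_nonzero_near:
  assumes fin: "finite V'" and pos: "\<forall>u\<in>V'. w u > 0" and nz: "\<forall>u\<in>V'. z u \<noteq> 0"
    and b: "\<beta> > 0" and c: "c > 0" and d: "\<delta> > 0"
  shows "\<exists>l::real. 1 < l \<and> l < 1 + \<delta> \<and> cf E \<beta> w V' X c (\<lambda>u. complex_of_real l * z u) \<noteq> 0"
proof -
  define d where "d T = complex_of_real (\<beta> ^ dcut E (X \<union> T)) * of_nat (sum w T + c) * (\<Prod>u\<in>T. z u ^ w u)" for T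
  define p where "p = (\<Sum>T\<in>Pow V'. monom (d T) (sum w T))"
  have cfp: "cf E \<beta> w V' X c (\<lambda>u. complex_of_real l * z u) = poly p (complex_of_real l)" for l
    unfolding cf_def p_def poly_sum poly_monom
  proof (rule sum.cong[OF refl])
    fix T assume "T \<in> Pow V'"
    have "(\<Prod>u\<in>T. (complex_of_real l * z u) ^ w u) = complex_of_real l ^ sum w T * (\<Prod>u\<in>T. z u ^ w u)"
      by (simp add: power_mult_distrib prod.distrib power_sum)
    thus "complex_of_real (\<beta> ^ dcut E (X \<union> T)) * of_nat (sum w T + c) * (\<Prod>u\<in>T. (complex_of_real l * z u) ^ w u) =
         d T * complex_of_real l ^ sum w T" by (simp add: d_def algebra_simps)
  qed
  have "coeff p (sum w V') = (\<Sum>T\<in>Pow V'. if T = V' then d T else 0)"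
    unfolding p_def coeff_sum coeff_monom
  proof (rule sum.cong[OF refl])
    fix T assume "T \<in> Pow V'"
    hence "sum w T = sum w V' \<longleftrightarrow> T = V'" using sum_eq_imp_eq[OF fin _ pos] by auto
    thus "(if sum w T = sum w V' then d T else 0) = (if T = V' then d T else 0)" by simp
  qed
  also have "\<dots> = d V'" using fin by (simp add: sum.delta')
  also have "d V' \<noteq> 0"
  proof -
    have "(of_nat (sum w V' + c) :: complex) \<noteq> 0" using c by (simp only: of_nat_eq_0_iff)
    thus ?thesis unfolding d_def using b nz fin by (simp only: mult_eq_0_iff) auto
  qed
  finally have "p \<noteq> 0" by auto
  hence "finite {x. poly p x = 0}" by (rule poly_roots_finite)
  hence "finite (complex_of_real -` {x. poly p x = 0})" by (rule finite_vimageI) (simp add: inj_on_def)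
  moreover have "infinite {1<..<1+\<delta>}" using d by simp
  ultimately obtain l where "l \<in> {1<..<1+\<delta>} - complex_of_real -` {x. poly p x = 0}"
    by (metis Diff_infinite_finite ex_in_conv finite.emptyI)
  thus ?thesis using cfp by auto
qed

lemma cf_cont: "isCont (\<lambda>l::real. cf E \<beta> w V' X c (\<lambda>u. complex_of_real l * z u)) l0"
  unfolding cf_def by (intro continuous_intros)




lemma root_ex:
  assumes "0 < n" "1 \<le> norm (x::complex)"
  shows "\<exists>r. r ^ n = x \<and> 1 \<le> norm r"
proof -
  have x0: "x \<noteq> 0" using assms(2) by auto
  define r where "r = exp (Ln x / of_nat n)"
  have "r ^ n = exp (of_nat n * (Ln x / of_nat n))" unfolding r_def by (simp only: exp_of_nat_mult)
  also have "\<dots> = x" using assms(1) x0 by simp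
  finally have rx: "r ^ n = x" .
  have "1 \<le> norm r"
  proof (rule ccontr)
    assume "\<not> 1 \<le> norm r"
    hence "norm r ^ n < 1" using assms(1) by (simp add: power_less_one_iff)
    moreover have "norm x = norm r ^ n" using rx by (metis norm_power)
    ultimately show False using assms(2) by linarith
  qed
  thus ?thesis using rx by blast
qed

theorem lemma8:
  fixes V :: "'a set" and E :: "'a multiset multiset" and v1 v2 :: 'a
  assumes "mgraph V E" and "mconnected V E" and "weighted_strict_GL V E"
    and "v1 \<in> V" and "v2 \<in> V" and "v1 \<noteq> v2" and "\<not> adj E v1 v2"
  shows "weighted_strict_GL (V - {v2}) (merge_edges v1 v2 E)"
proof -
  note v12 = assms(4,5,6)
  have finV: "finite V" and sz: "\<forall>e\<in>#E. size e = 2" using assms(1) by (auto simp: mgraph_def)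
  define V' where "V' = V - {v1, v2}"
  have finV': "finite V'" using finV by (simp add: V'_def)
  have nV': "v1 \<notin> V'" "v2 \<notin> V'" by (auto simp: V'_def)
  have Veq: "V = insert v1 (insert v2 V')" using v12 by (auto simp: V'_def)
  have V1eq: "V - {v2} = insert v1 V'" using v12 by (auto simp: V'_def)
  define E1 where "E1 = merge_edges v1 v2 E"
  define f where "f x = (if x = v2 then v1 else x)" for x
  have E1f: "E1 = image_mset (image_mset f) E" by (simp add: E1_def merge_edges_def f_def[abs_def])
  have conn: "(v1, v2) \<in> {(a, b). adj E a b}\<^sup>*" using assms(2) v12 by (auto simp: mconnected_def)
  have d1: "1 \<le> mdeg E v1"
  proof -
    obtain y where "adj E v1 y" using conn v12(3) by (auto elim: converse_rtranclE)
    hence "{#v1, y#} \<in># E" by (simp add: adj_def)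
    from mdeg_ge[OF this, of v1] show ?thesis by simp
  qed
  have d2: "1 \<le> mdeg E v2"
  proof -
    obtain y where "adj E y v2" using conn v12(3) by (auto elim: rtranclE)
    hence "{#y, v2#} \<in># E" by (simp add: adj_def)
    from mdeg_ge[OF this, of v2] show ?thesis by (simp split: if_splits)
  qed
  show ?thesis unfolding weighted_strict_GL_def E1_def[symmetric]
  proof (intro allI impI)
    fix w1 :: "'a \<Rightarrow> nat" and \<beta> :: real and z1 :: "'a \<Rightarrow> complex"
    assume leg1: "legal (V - {v2}) E1 w1" and b0: "0 < \<beta>" and b1: "\<beta> < 1"
      and nz1: "\<forall>v\<in>V - {v2}. 1 \<le> norm (z1 v)"
    define W where "W = w1 v1"
    have "mdeg E1 v1 = mdeg E v1 + mdeg E v2" unfolding E1_def using mdeg_merge1[OF sz v12(3)] .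
    moreover have "mdeg E1 v1 \<le> w1 v1" using leg1 v12 unfolding legal_def by blast
    ultimately have WW: "W \<ge> mdeg E v1 + mdeg E v2" by (simp add: W_def)
    define a where "a = W - mdeg E v2"
    define b where "b = mdeg E v2"
    have a1: "a \<ge> mdeg E v1" "a > 0" using WW d1 by (auto simp: a_def)
    have b1': "b > 0" using d2 by (simp add: b_def)
    have Wab: "W = a + b" using WW by (simp add: a_def b_def)
    define w where "w = w1(v1 := a, v2 := b)"
    have w1pos: "\<forall>u\<in>V'. w1 u > 0" using leg1 by (auto simp: legal_def V1eq)
    have legal: "legal V E w" unfolding legal_def
    proof
      fix u assume "u \<in> V"
      show "0 < w u \<and> mdeg E u \<le> w u"
      proof (cases "u = v1 \<or> u = v2")
        case True thus ?thesis using a1 b1' v12(3) by (auto simp: w_def b_def)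
      next
        case False
        hence "u \<in> V'" using \<open>u \<in> V\<close> by (auto simp: V'_def)
        moreover have "mdeg E1 u = mdeg E u" unfolding E1_def using mdeg_merge2[OF sz] False by auto
        ultimately show ?thesis using leg1 False by (auto simp: legal_def w_def V1eq)
      qed
    qed
    have GL: "\<And>z. \<forall>v\<in>V. 1 \<le> norm (z v) \<Longrightarrow> DGx V E w \<beta> z \<noteq> 0"
      using assms(3) legal b0 b1 by (auto simp: weighted_strict_GL_def DG_Zw[OF finV, symmetric])
    define A where "A \<zeta> = cf E \<beta> w1 V' {} 0 \<zeta>" for \<zeta>
    define B where "B \<zeta> = cf E \<beta> w1 V' {v1} a \<zeta>" for \<zeta>
    define C where "C \<zeta> = cf E \<beta> w1 V' {v2} b \<zeta>" for \<zeta>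
    define D where "D \<zeta> = cf E \<beta> w1 V' {v1, v2} (a + b) \<zeta>" for \<zeta>
    have H: "\<forall>x y. 1 \<le> norm x \<longrightarrow> 1 \<le> norm y \<longrightarrow> A \<zeta> + B \<zeta> * x + C \<zeta> * y + D \<zeta> * x * y \<noteq> 0"
      if n\<zeta>: "\<forall>u\<in>V'. 1 \<le> norm (\<zeta> u)" for \<zeta>
    proof (intro allI impI)
      fix x y :: complex assume nx: "1 \<le> norm x" and ny: "1 \<le> norm y"
      obtain rx where rx: "rx ^ a = x" "1 \<le> norm rx" using root_ex[OF a1(2) nx] by blast
      obtain ry where ry: "ry ^ b = y" "1 \<le> norm ry" using root_ex[OF b1' ny] by blast
      define z where "z = \<zeta>(v1 := rx, v2 := ry)"
      have "\<forall>v\<in>V. 1 \<le> norm (z v)" using n\<zeta> rx ry v12(3) by (auto simp: z_def Veq)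
      hence "DGx V E w \<beta> z \<noteq> 0" by (rule GL)
      moreover have "DGx V E w \<beta> z = A \<zeta> + B \<zeta> * x + C \<zeta> * y + D \<zeta> * x * y"
      proof -
        have cg: "\<forall>u\<in>V'. w u = w1 u \<and> z u = \<zeta> u" using nV' by (auto simp: w_def z_def)
        have wv: "w v1 = a" "w v2 = b" "z v1 = rx" "z v2 = ry" using v12(3) by (auto simp: w_def z_def)
        show ?thesis unfolding Veq decomp2[OF finV' nV' v12(3)] cf_cong[OF cg] wv A_def B_def C_def D_def
          using rx ry by (simp add: algebra_simps)
      qed
      ultimately show "A \<zeta> + B \<zeta> * x + C \<zeta> * y + D \<zeta> * x * y \<noteq> 0" by simp
    qed
    have G1: "DG (V - {v2}) (Zw (V - {v2}) E1 w1 \<beta>) z1 = A z1 + D z1 * z1 v1 ^ W"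
    proof -
      have "DG (V - {v2}) (Zw (V - {v2}) E1 w1 \<beta>) z1 = DGx (insert v1 V') E1 w1 \<beta> z1"
        unfolding V1eq using finV' by (simp add: DG_Zw)
      also have "\<dots> = cf E1 \<beta> w1 V' {} 0 z1 + cf E1 \<beta> w1 V' {v1} (w1 v1) z1 * z1 v1 ^ w1 v1"
        by (rule decomp1[OF finV' nV'(1)])
      also have "cf E1 \<beta> w1 V' {} 0 z1 = A z1" unfolding A_def
      proof (rule cf_dcut)
        fix T assume "T \<subseteq> V'"
        hence "\<forall>x. (f x \<in> T) = (x \<in> T)" using nV' by (auto simp: f_def)
        thus "dcut E1 ({} \<union> T) = dcut E ({} \<union> T)" unfolding E1f using dcut_merge[OF sz] by simp
      qed
      also have "cf E1 \<beta> w1 V' {v1} (w1 v1) z1 = D z1" unfolding D_def W_def[symmetric] Wab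
      proof (rule cf_dcut)
        fix T assume "T \<subseteq> V'"
        hence "\<forall>x. (f x \<in> {v1} \<union> T) = (x \<in> {v1, v2} \<union> T)" using nV' by (auto simp: f_def)
        thus "dcut E1 ({v1} \<union> T) = dcut E ({v1, v2} \<union> T)" unfolding E1f using dcut_merge[OF sz] by blast
      qed
      finally show ?thesis by (simp add: W_def)
    qed
    have nzV': "\<forall>u\<in>V'. 1 \<le> norm (z1 u)" using nz1 V1eq by auto
    show "DG (V - {v2}) (Zw (V - {v2}) E1 w1 \<beta>) z1 \<noteq> 0"
    proof
      assume "DG (V - {v2}) (Zw (V - {v2}) E1 w1 \<beta>) z1 = 0"
      hence Z: "A z1 + D z1 * z1 v1 ^ W = 0" using G1 by simp
      have nu: "1 \<le> norm (z1 v1 ^ W)" using nz1 v12 by (simp add: norm_power)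
      show False
      proof (cases "D z1 = 0")
        case False
        thus False using asano[OF H[OF nzV'] False nu] Z by simp
      next
        case True
        hence A0: "A z1 = 0" using Z by simp
        have BC: "B z1 \<noteq> 0 \<or> C z1 \<noteq> 0"
        proof (rule ccontr)
          assume "\<not> (B z1 \<noteq> 0 \<or> C z1 \<noteq> 0)"
          hence "A z1 + B z1 * 1 + C z1 * 1 + D z1 * 1 * 1 = 0" using A0 True by simp
          thus False using H[OF nzV', rule_format, of 1 1] by simp
        qed
        define \<zeta> where "\<zeta> l = (\<lambda>u. complex_of_real l * z1 u)" for l
        define g where "g l = norm (B (\<zeta> l)) + norm (C (\<zeta> l)) - 2 * norm (D (\<zeta> l))" for l
        have z1eq: "\<zeta> 1 = z1" by (simp add: \<zeta>_def)
        have "g 1 > 0" unfolding g_def z1eq using True BC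
          by (auto simp: add_pos_nonneg add_nonneg_pos)
        moreover have "isCont g 1" unfolding g_def \<zeta>_def B_def C_def D_def
          by (intro continuous_intros cf_cont)
        ultimately have "eventually (\<lambda>l. g l > 0) (at 1)"
          by (metis isCont_def order_tendstoD(1))
        then obtain \<delta> where d0: "\<delta> > 0" and dg: "\<forall>l. l \<noteq> 1 \<and> dist l 1 < \<delta> \<longrightarrow> g l > 0"
          by (auto simp: eventually_at)
        have nzne: "\<forall>u\<in>V'. z1 u \<noteq> 0" using nzV' by force
        obtain l where l: "1 < l" "l < 1 + \<delta>" "D (\<zeta> l) \<noteq> 0"
          using cf_nonzero_near[OF finV' w1pos nzne b0 _ d0, of "a + b" E "{v1, v2}"] a1(2)
          unfolding D_def \<zeta>_def by auto
        have "g l > 0" using dg l by (auto simp: dist_real_def)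
        moreover have "\<forall>u\<in>V'. 1 \<le> norm (\<zeta> l u)"
        proof
          fix u assume "u \<in> V'"
          hence "1 \<le> norm (z1 u)" using nzV' by auto
          moreover have "norm (\<zeta> l u) = l * norm (z1 u)" using l by (simp add: \<zeta>_def norm_mult)
          ultimately show "1 \<le> norm (\<zeta> l u)" using l(1) by (metis less_eq_real_def mult_mono' mult_1 zero_le_one)
        qed
        note Hl = H[OF this]
        have "norm (C (\<zeta> l)) < norm (D (\<zeta> l))" by (rule asano_bound[OF Hl l(3)])
        moreover have "norm (B (\<zeta> l)) < norm (D (\<zeta> l))" by (rule asano_bound[OF asano_swap[OF Hl] l(3)])
        ultimately show False unfolding g_def by linarith
      qed
    qed
  qed
qed


end
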